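(* Let $3\leq m\leq n$, $\ell=m-1$, $p=(m-1)n$. Then $\mathfrak{M}\subset\mathfrak{S}$.
   Context: $E_n$ is the $n\times n$ identity. $\mathfrak{M}$ is the set of $Y=(Y_1;\ldots;Y_\ell)\in\mathbb{R}^{n\times n\times\ell}$ (slices $Y_k$ are $n\times n$ matrices) for which there exist a real $m\times p$ matrix $(x_{ij})$ and a real $n\times p$ matrix $A=(\mathbf{a}_1,\ldots,\mathbf{a}_p)$ such that $(x_{1j}Y_1+\cdots+x_{\ell j}Y_\ell-x_{mj}E_n)\mathbf{a}_j=\mathbf{0}$ for $1\leq j\leq p$ and $B=\begin{pmatrix}AD_1\\ \vdots\\ AD_\ell\end{pmatrix}$ is nonsingular, where $D_k=\operatorname{diag}(x_{k1},\ldots,x_{kp})$. For such $Y$, $V(Y)=\{\mathbf{a}\in\mathbb{R}^n\mid \sum_{k=1}^\ell x_kY_k\mathbf{a}=x_m\mathbf{a}\text{ for some }(x_1,\ldots,x_m)^\top\neq\mathbf{0}\}$, $\hat V(Y)$ is the linear span of $V(Y)$, and $\mathfrak{S}=\{Y\in\mathbb{R}^{n\times n\times\ell}\mid \dim\hat V(Y)=n\}$. *)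

theory Defs
  imports "Jordan_Normal_Form.DL_Rank"
begin

text \<open>A tensor Y in R^(n x n x l) is a list of l slices, each an n x n real matrix.
  Indices are 0-based: slice Y_k of the paper is Y ! (k-1); row k of the m x p matrix
  (x_ij) of the paper is row k-1 of X; x_m is row m-1.\<close>

definition slice_comb :: "nat \<Rightarrow> real mat list \<Rightarrow> (nat \<Rightarrow> real) \<Rightarrow> real mat" where
  "slice_comb n Y c = mat n n (\<lambda>(i, i'). \<Sum>k<length Y. c k * (Y ! k) $$ (i, i'))"

text \<open>The block matrix B = (A D_1; ...; A D_l): row k*n+i (k<l, i<n), column j is A_ij * x_(k+1) j.\<close>
definition block_B :: "nat \<Rightarrow> nat \<Rightarrow> nat \<Rightarrow> real mat \<Rightarrow> real mat \<Rightarrow> real mat" where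
  "block_B n l p X A = mat (l * n) p (\<lambda>(r, j). A $$ (r mod n, j) * X $$ (r div n, j))"

definition in_frakM :: "nat \<Rightarrow> nat \<Rightarrow> nat \<Rightarrow> real mat list \<Rightarrow> bool" where
  "in_frakM n m p Y \<longleftrightarrow>
     (\<forall>k<length Y. Y ! k \<in> carrier_mat n n) \<and>
     (\<exists>X A. X \<in> carrier_mat m p \<and> A \<in> carrier_mat n p \<and>
        (\<forall>j<p. (slice_comb n Y (\<lambda>k. X $$ (k, j)) - X $$ (m - 1, j) \<cdot>\<^sub>m 1\<^sub>m n) *\<^sub>v col A j = 0\<^sub>v n) \<and>
        invertible_mat (block_B n (length Y) p X A))"

definition V_set :: "nat \<Rightarrow> nat \<Rightarrow> real mat list \<Rightarrow> real vec set" where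
  "V_set n m Y = {a \<in> carrier_vec n. \<exists>c :: nat \<Rightarrow> real. (\<exists>k<m. c k \<noteq> 0) \<and>
       slice_comb n Y c *\<^sub>v a = c (m - 1) \<cdot>\<^sub>v a}"

definition dim_hatV :: "nat \<Rightarrow> nat \<Rightarrow> real mat list \<Rightarrow> nat" where
  "dim_hatV n m Y = vectorspace.dim class_ring
     ((module_vec TYPE(real) n)\<lparr>carrier := LinearCombinations.module.span class_ring (module_vec TYPE(real) n) (V_set n m Y)\<rparr>)"

definition in_frakS :: "nat \<Rightarrow> nat \<Rightarrow> real mat list \<Rightarrow> bool" where
  "in_frakS n m Y \<longleftrightarrow> (\<forall>k<length Y. Y ! k \<in> carrier_mat n n) \<and> dim_hatV n m Y = n"

end

theory Submission imports Defs begin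

lemma smult_one_mv: assumes "(a::real vec) \<in> carrier_vec n"
  shows "(x \<cdot>\<^sub>m 1\<^sub>m n) *\<^sub>v a = x \<cdot>\<^sub>v a"
  using assms by (intro eq_vecI) (auto simp: smult_scalar_prod_distrib)

lemma eig: assumes S: "S \<in> carrier_mat n n" and a: "(a::real vec) \<in> carrier_vec n"
  and h: "(S - x \<cdot>\<^sub>m 1\<^sub>m n) *\<^sub>v a = 0\<^sub>v n"
  shows "S *\<^sub>v a = x \<cdot>\<^sub>v a"
proof -
  have "(S - x \<cdot>\<^sub>m 1\<^sub>m n) *\<^sub>v a = S *\<^sub>v a - x \<cdot>\<^sub>v a"
    using minus_mult_distrib_mat_vec[OF S _ a, of "x \<cdot>\<^sub>m 1\<^sub>m n"] smult_one_mv[OF a] by auto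
  with h have e: "S *\<^sub>v a - x \<cdot>\<^sub>v a = 0\<^sub>v n" by simp
  show ?thesis
  proof (rule eq_vecI)
    fix i assume "i < dim_vec (x \<cdot>\<^sub>v a)"
    hence i: "i < n" using a by auto
    have "(S *\<^sub>v a - x \<cdot>\<^sub>v a) $ i = 0" using e i by simp
    thus "(S *\<^sub>v a) $ i = (x \<cdot>\<^sub>v a) $ i" using i S a by simp
  qed (use S a in auto)
qed

context fixes n :: nat begin
interpretation vs: vec_space "TYPE(real)" n .

lemma span_full:
  assumes "V \<subseteq> carrier_vec n" and "\<forall>v\<in>carrier_vec n. v \<in> vs.span V"
  shows "vs.span V = carrier_vec n"
  using assms vs.span_is_subset2 by auto

lemma dim_full:
  assumes "vs.span V = carrier_vec n"
  shows "vectorspace.dim class_ring ((module_vec TYPE(real) n)\<lparr>carrier := vs.span V\<rparr>) = n"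
proof -
  have "(module_vec TYPE(real) n)\<lparr>carrier := vs.span V\<rparr> = module_vec TYPE(real) n"
    using assms by (simp add: module_vec_def)
  thus ?thesis using vs.dim_is_n by simp
qed

lemma col_in_span:
  assumes A: "A \<in> carrier_mat n p" and cols: "\<forall>j<p. col A j \<in> W" and W: "W \<subseteq> carrier_vec n"
    and u: "u \<in> carrier_vec p"
  shows "A *\<^sub>v u \<in> vs.span W"
proof -
  have "A *\<^sub>v u \<in> vs.col_space A" using vs.col_space_eq[OF A] A u by auto
  moreover have "set (cols A) \<subseteq> W" using cols A by (auto simp: cols_def)
  ultimately show ?thesis unfolding vs.col_space_def using vs.span_is_monotone by blast
qed
end

theorem mainTheorem5:
  fixes n m l p :: nat and Y :: "real mat list"
  assumes "3 \<le> m" and "m \<le> n" and "l = m - 1" and "p = (m - 1) * n"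
    and "length Y = l"
    and "in_frakM n m p Y"
  shows "in_frakS n m Y"
proof -
  from assms(6) obtain X A where Ycar: "\<forall>k<length Y. Y ! k \<in> carrier_mat n n"
    and X: "X \<in> carrier_mat m p" and A: "A \<in> carrier_mat n p"
    and eq: "\<forall>j<p. (slice_comb n Y (\<lambda>k. X $$ (k, j)) - X $$ (m - 1, j) \<cdot>\<^sub>m 1\<^sub>m n) *\<^sub>v col A j = 0\<^sub>v n"
    and inv: "invertible_mat (block_B n (length Y) p X A)"
    unfolding in_frakM_def by blast
  define B where "B = block_B n l p X A"
  have Bc: "B \<in> carrier_mat (l*n) p" unfolding B_def block_B_def by auto
  have lnp: "l * n = p" using assms by simp
  from inv obtain C where BC: "B * C = 1\<^sub>m (l*n)" and CB: "C * B = 1\<^sub>m (dim_row C)"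
    unfolding invertible_mat_def inverts_mat_def B_def assms(5) using Bc B_def by auto
  have Cc: "C \<in> carrier_mat p (l*n)"
  proof -
    have "dim_col C = l*n" using BC Bc by (metis index_mult_mat(3) index_one_mat(3))
    moreover have "dim_row C = p" using CB Bc by (metis index_mult_mat(3) index_one_mat(3) carrier_matD(2))
    ultimately show ?thesis by auto
  qed
  have l2: "l \<ge> 2" using assms by simp
  define V where "V = V_set n m Y"
  have Vc: "V \<subseteq> carrier_vec n" unfolding V_def V_set_def by auto
  have colV: "col A j \<in> V" if j: "j < p" for j
  proof -
    have ex: "\<exists>k<m. X $$ (k, j) \<noteq> 0"
    proof (rule ccontr)
      assume "\<not> ?thesis"
      hence z: "\<And>k. k < m \<Longrightarrow> X $$ (k, j) = 0" by auto
      have "(C * B) $$ (j, j) = 1" using CB Cc j by simp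
      moreover have "(C * B) $$ (j, j) = row C j \<bullet> col B j" using Cc Bc j by simp
      moreover have "col B j = 0\<^sub>v (l*n)"
      proof (rule eq_vecI)
        fix r assume "r < dim_vec (0\<^sub>v (l * n) :: real vec)"
        hence r: "r < l*n" by simp
        have "r div n < l" using r by (simp add: less_mult_imp_div_less)
        hence "X $$ (r div n, j) = 0" using z assms by simp
        thus "col B j $ r = 0\<^sub>v (l * n) $ r" using r j Bc unfolding B_def block_B_def lnp by simp
      qed (use Bc in simp)
      ultimately show False using Cc j by (simp add: scalar_prod_right_zero[of _ "l*n"])
    qed
    have a: "col A j \<in> carrier_vec n" using A j by simp
    have Sc: "slice_comb n Y (\<lambda>k. X $$ (k, j)) \<in> carrier_mat n n" unfolding slice_comb_def by simp
    have "slice_comb n Y (\<lambda>k. X $$ (k, j)) *\<^sub>v col A j = X $$ (m - 1, j) \<cdot>\<^sub>v col A j"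
      using eig[OF Sc a] eq j by blast
    thus ?thesis unfolding V_def V_set_def using a ex
      by (intro CollectI conjI exI[of _ "\<lambda>k. X $$ (k, j)"]) auto
  qed
  have surjA: "\<exists>u\<in>carrier_vec p. A *\<^sub>v u = v" if v: "v \<in> carrier_vec n" for v
  proof -
    define e where "e = vec (l*n) (\<lambda>r. if r < n then v $ r else 0)"
    define w where "w = C *\<^sub>v e"
    have ec: "e \<in> carrier_vec (l*n)" unfolding e_def by simp
    have Bw: "B *\<^sub>v w = e" unfolding w_def
      using assoc_mult_mat_vec[OF Bc Cc ec, symmetric] BC ec by simp
    define u where "u = vec p (\<lambda>j. X $$ (0, j) * w $ j)"
    have "A *\<^sub>v u = v"
    proof (rule eq_vecI)
      fix i assume "i < dim_vec v"
      hence i: "i < n" using v by simp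
      hence il: "i < l * n" using l2 by (metis le_trans mult_le_mono1 nat_mult_1 not_less one_le_numeral)
      have "(B *\<^sub>v w) $ i = (\<Sum>j<p. B $$ (i, j) * w $ j)"
        using Bc Cc il unfolding w_def by (simp add: scalar_prod_def lessThan_atLeast0)
      also have "\<dots> = (\<Sum>j<p. A $$ (i, j) * (X $$ (0, j) * w $ j))"
        using i il unfolding B_def block_B_def lnp by (intro sum.cong) auto
      also have "\<dots> = (A *\<^sub>v u) $ i"
        using A i unfolding u_def by (simp add: scalar_prod_def lessThan_atLeast0)
      finally show "(A *\<^sub>v u) $ i = v $ i" using Bw i il unfolding e_def by simp
    qed (use A v in auto)
    thus ?thesis unfolding u_def by auto
  qed
  have "\<forall>v\<in>carrier_vec n. v \<in> LinearCombinations.module.span class_ring (module_vec TYPE(real) n) V"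
  proof
    fix v :: "real vec" assume "v \<in> carrier_vec n"
    then obtain u where u: "u \<in> carrier_vec p" "A *\<^sub>v u = v" using surjA by blast
    have "A *\<^sub>v u \<in> LinearCombinations.module.span class_ring (module_vec TYPE(real) n) V"
      by (rule col_in_span[OF A _ Vc u(1)]) (use colV in blast)
    thus "v \<in> LinearCombinations.module.span class_ring (module_vec TYPE(real) n) V" using u by simp
  qed
  hence sp: "LinearCombinations.module.span class_ring (module_vec TYPE(real) n) V = carrier_vec n"
    by (rule span_full[OF Vc])
  show ?thesis unfolding in_frakS_def dim_hatV_def
    using Ycar dim_full[OF sp] unfolding V_def by simp
qed
end
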